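(* Let $K$ be a field, $\vartheta$ any one of the four types (left, right, pre-two-sided, two-sided), and $\mathcal A$ a $K$-algebra which is algebraic over $K$ with $\mathcal A\neq K$ (i.e., $\mathcal A\neq K\cdot 1$). Then for every proper $\vartheta$-Mathieu subspace $M$ of $\mathcal A$ there exists a maximal non-trivial $\vartheta$-Mathieu subspace of $\mathcal A$ containing $M$. In particular, $\mathcal A$ has at least one maximal non-trivial $\vartheta$-Mathieu subspace.
   Context: All algebras are associative and unital. $\mathcal A$ is algebraic over $K$ if every element is a root of a nonzero polynomial over $K$. A subspace is proper if $\neq\mathcal A$ and non-trivial if $\neq 0,\mathcal A$; a maximal non-trivial $\vartheta$-Mathieu subspace is one maximal under inclusion among non-trivial $\vartheta$-Mathieu subspaces. A $K$-subspace $V$ is a left (resp. right) Mathieu subspace if whenever $a^m\in V$ for all $m\ge1$, then for every $b\in\mathcal A$, $ba^m\in V$ (resp. $a^mb\in V$) for all sufficiently large $m$; pre-two-sided if both left and right; two-sided if whenever $a^m\in V$ for all $m\ge1$, for all $b,c\in\mathcal A$, $ba^mc\in V$ for all sufficiently large $m$. *)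

theory Defs
  imports Main "HOL-Computational_Algebra.Polynomial"
begin

definition is_K_algebra :: "('k::field \<Rightarrow> 'a::ring_1 \<Rightarrow> 'a) \<Rightarrow> bool" where
  "is_K_algebra scale \<longleftrightarrow> vector_space scale \<and>
     (\<forall>c x y. scale c (x * y) = scale c x * y) \<and>
     (\<forall>c x y. scale c (x * y) = x * scale c y)"

definition alg_eval :: "('k::field \<Rightarrow> 'a::ring_1 \<Rightarrow> 'a) \<Rightarrow> 'k poly \<Rightarrow> 'a \<Rightarrow> 'a" where
  "alg_eval scale p a = (\<Sum>i\<le>degree p. scale (coeff p i) (a ^ i))"

definition algebraic_over :: "('k::field \<Rightarrow> 'a::ring_1 \<Rightarrow> 'a) \<Rightarrow> bool" where
  "algebraic_over scale \<longleftrightarrow> (\<forall>a. \<exists>p. p \<noteq> 0 \<and> alg_eval scale p a = 0)"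

datatype mathieu_type = LeftM | RightM | PreTwoSidedM | TwoSidedM

definition left_mathieu :: "('k::field \<Rightarrow> 'a::ring_1 \<Rightarrow> 'a) \<Rightarrow> 'a set \<Rightarrow> bool" where
  "left_mathieu scale V \<longleftrightarrow> module.subspace scale V \<and>
     (\<forall>a. (\<forall>m\<ge>1. a ^ m \<in> V) \<longrightarrow> (\<forall>b. \<exists>N. \<forall>m\<ge>N. b * a ^ m \<in> V))"

definition right_mathieu :: "('k::field \<Rightarrow> 'a::ring_1 \<Rightarrow> 'a) \<Rightarrow> 'a set \<Rightarrow> bool" where
  "right_mathieu scale V \<longleftrightarrow> module.subspace scale V \<and>
     (\<forall>a. (\<forall>m\<ge>1. a ^ m \<in> V) \<longrightarrow> (\<forall>b. \<exists>N. \<forall>m\<ge>N. a ^ m * b \<in> V))"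

definition two_sided_mathieu :: "('k::field \<Rightarrow> 'a::ring_1 \<Rightarrow> 'a) \<Rightarrow> 'a set \<Rightarrow> bool" where
  "two_sided_mathieu scale V \<longleftrightarrow> module.subspace scale V \<and>
     (\<forall>a. (\<forall>m\<ge>1. a ^ m \<in> V) \<longrightarrow> (\<forall>b c. \<exists>N. \<forall>m\<ge>N. b * a ^ m * c \<in> V))"

fun mathieu :: "mathieu_type \<Rightarrow> ('k::field \<Rightarrow> 'a::ring_1 \<Rightarrow> 'a) \<Rightarrow> 'a set \<Rightarrow> bool" where
  "mathieu LeftM scale V = left_mathieu scale V"
| "mathieu RightM scale V = right_mathieu scale V"
| "mathieu PreTwoSidedM scale V = (left_mathieu scale V \<and> right_mathieu scale V)"
| "mathieu TwoSidedM scale V = two_sided_mathieu scale V"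

definition nontrivial_mathieu :: "mathieu_type \<Rightarrow> ('k::field \<Rightarrow> 'a::ring_1 \<Rightarrow> 'a) \<Rightarrow> 'a set \<Rightarrow> bool" where
  "nontrivial_mathieu t scale V \<longleftrightarrow> mathieu t scale V \<and> V \<noteq> {0} \<and> V \<noteq> UNIV"

definition maximal_nontrivial_mathieu :: "mathieu_type \<Rightarrow> ('k::field \<Rightarrow> 'a::ring_1 \<Rightarrow> 'a) \<Rightarrow> 'a set \<Rightarrow> bool" where
  "maximal_nontrivial_mathieu t scale V \<longleftrightarrow> nontrivial_mathieu t scale V \<and>
     (\<forall>W. nontrivial_mathieu t scale W \<and> V \<subseteq> W \<longrightarrow> W = V)"

end

theory Submission
  imports Defs
begin

locale kalg = vector_space scale for scale :: "'k::field \<Rightarrow> 'a::ring_1 \<Rightarrow> 'a" +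
  assumes ml: "scale c (x*y) = scale c x * y" and mr: "scale c (x*y) = x * scale c y"
begin

lemma pow_span:
  assumes V: "subspace V" and cd: "c d \<noteq> 0"
    and eq: "(\<Sum>i\<le>d. scale (c i) (a^i)) = 0"
    and base: "\<forall>j\<in>{1..d}. a^j \<in> V"
  shows "\<forall>m\<ge>1. a^m \<in> V"
proof (intro allI impI)
  fix m :: nat assume "m \<ge> 1"
  then show "a^m \<in> V"
  proof (induction m rule: less_induct)
    case (less m)
    show ?case
    proof (cases "m \<le> d")
      case True then show ?thesis using base less.prems by auto
    next
      case False
      then obtain k where k: "m = d + k" "k \<ge> 1" by (intro that[of "m - d"]) auto
      have "a^k * (\<Sum>i\<le>d. scale (c i) (a^i)) = (\<Sum>i\<le>d. scale (c i) (a^(i+k)))"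
        unfolding sum_distrib_left by (intro sum.cong refl) (simp add: mr[symmetric], metis power_add add.commute)
      then have "(\<Sum>i\<le>d. scale (c i) (a^(i+k))) = 0" using eq by simp
      then have "(\<Sum>i<d. scale (c i) (a^(i+k))) + scale (c d) (a^m) = 0"
        using k by (simp add: lessThan_Suc_atMost[symmetric])
      then have e2: "scale (c d) (a^m) = - (\<Sum>i<d. scale (c i) (a^(i+k)))"
        by (simp add: eq_neg_iff_add_eq_0 add.commute)
      have "(\<Sum>i<d. scale (c i) (a^(i+k))) \<in> V"
        apply (rule subspace_sum[OF V])
        apply (rule subspace_scale[OF V])
        apply (rule less.IH) using k by auto
      then have "scale (c d) (a^m) \<in> V" using e2 subspace_neg[OF V] by simp
      then have "scale (inverse (c d)) (scale (c d) (a^m)) \<in> V" using subspace_scale[OF V] by blast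
      then show ?thesis using cd by simp
    qed
  qed
qed


lemma alg_chain:
  assumes alg: "\<exists>p. p \<noteq> 0 \<and> alg_eval scale p a = 0"
    and Cne: "C \<noteq> {}" and Csub: "\<forall>V\<in>C. subspace V"
    and Cch: "\<forall>A\<in>C. \<forall>B\<in>C. A \<subseteq> B \<or> B \<subseteq> A"
    and pw: "\<forall>m\<ge>1. a^m \<in> \<Union>C"
  shows "\<exists>V\<in>C. \<forall>m\<ge>1. a^m \<in> V"
proof -
  obtain p where p: "p \<noteq> 0" "alg_eval scale p a = 0" using alg by blast
  define d where "d = degree p"
  have cd: "coeff p d \<noteq> 0" using p(1) unfolding d_def by simp
  have eq: "(\<Sum>i\<le>d. scale (coeff p i) (a^i)) = 0" using p(2) unfolding alg_eval_def d_def .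
  have fin: "finite ((\<lambda>j. a^j) ` {1..d})" by simp
  have sub: "(\<lambda>j. a^j) ` {1..d} \<subseteq> \<Union>C" using pw by auto
  have ch: "subset.chain UNIV C" using Cch unfolding subset_chain_def by auto
  obtain V where V: "V \<in> C" "(\<lambda>j. a^j) ` {1..d} \<subseteq> V"
    using finite_subset_Union_chain[OF fin sub Cne ch] by blast
  have "\<forall>m\<ge>1. a^m \<in> V"
    by (rule pow_span[OF _ cd eq]) (use V Csub in auto)
  then show ?thesis using V by blast
qed

lemma mathieu_subspace: "mathieu t scale V \<Longrightarrow> subspace V"
  by (cases t) (auto simp: left_mathieu_def right_mathieu_def two_sided_mathieu_def)

lemma mathieu_one: assumes "mathieu t scale V" "1 \<in> V" shows "V = UNIV"
proof -
  have p: "\<forall>m\<ge>1. (1::'a)^m \<in> V" using assms(2) by simp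
  have "b \<in> V" for b
  proof (cases t)
    case LeftM
    then have "left_mathieu scale V" using assms(1) by simp
    then obtain N where "\<forall>m\<ge>N. b * 1^m \<in> V" using p unfolding left_mathieu_def by blast
    then show ?thesis by auto
  next
    case RightM
    then have "right_mathieu scale V" using assms(1) by simp
    then obtain N where "\<forall>m\<ge>N. 1^m * b \<in> V" using p unfolding right_mathieu_def by blast
    then show ?thesis by auto
  next
    case PreTwoSidedM
    then have "left_mathieu scale V" using assms(1) by simp
    then obtain N where "\<forall>m\<ge>N. b * 1^m \<in> V" using p unfolding left_mathieu_def by blast
    then show ?thesis by auto
  next
    case TwoSidedM
    then have "two_sided_mathieu scale V" using assms(1) by simp
    then obtain N where "\<forall>m\<ge>N. b * 1^m * 1 \<in> V" using p unfolding two_sided_mathieu_def by blast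
    then show ?thesis by auto
  qed
  then show ?thesis by auto
qed

lemma union_subspace:
  assumes Cne: "C \<noteq> {}" and Csub: "\<forall>V\<in>C. subspace V"
    and Cch: "\<forall>A\<in>C. \<forall>B\<in>C. A \<subseteq> B \<or> B \<subseteq> A"
  shows "subspace (\<Union>C)"
proof (rule subspaceI)
  show "0 \<in> \<Union>C" using Cne Csub subspace_0 by blast
next
  fix x y assume "x \<in> \<Union>C" "y \<in> \<Union>C"
  then obtain A B where "A \<in> C" "B \<in> C" "x \<in> A" "y \<in> B" by blast
  then show "x + y \<in> \<Union>C" using Cch Csub subspace_add by (metis UnionI subsetD)
next
  fix c x assume "x \<in> \<Union>C"
  then show "scale c x \<in> \<Union>C" using Csub subspace_scale by blast
qed

lemma chain_mathieu:
  assumes alg: "algebraic_over scale"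
    and Cne: "C \<noteq> {}" and Cm: "\<forall>V\<in>C. mathieu t scale V"
    and Cch: "\<forall>A\<in>C. \<forall>B\<in>C. A \<subseteq> B \<or> B \<subseteq> A"
  shows "mathieu t scale (\<Union>C)"
proof -
  have Csub: "\<forall>V\<in>C. subspace V" using Cm mathieu_subspace by blast
  have us: "subspace (\<Union>C)" by (rule union_subspace[OF Cne Csub Cch])
  have key: "\<exists>V\<in>C. \<forall>m\<ge>1. a^m \<in> V" if "\<forall>m\<ge>1. a^m \<in> \<Union>C" for a
    using alg_chain[OF _ Cne Csub Cch that] alg unfolding algebraic_over_def by blast
  show ?thesis
  proof (cases t)
    case LeftM
    show ?thesis unfolding LeftM mathieu.simps left_mathieu_def
    proof (intro conjI us allI impI)
      fix a b assume "\<forall>m\<ge>1. a^m \<in> \<Union>C"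
      then obtain V where "V \<in> C" "\<forall>m\<ge>1. a^m \<in> V" using key by blast
      moreover then have "left_mathieu scale V" using Cm LeftM by auto
      ultimately show "\<exists>N. \<forall>m\<ge>N. b * a ^ m \<in> \<Union> C" unfolding left_mathieu_def by blast
    qed
  next
    case RightM
    show ?thesis unfolding RightM mathieu.simps right_mathieu_def
    proof (intro conjI us allI impI)
      fix a b assume "\<forall>m\<ge>1. a^m \<in> \<Union>C"
      then obtain V where "V \<in> C" "\<forall>m\<ge>1. a^m \<in> V" using key by blast
      moreover then have "right_mathieu scale V" using Cm RightM by auto
      ultimately show "\<exists>N. \<forall>m\<ge>N. a ^ m * b \<in> \<Union> C" unfolding right_mathieu_def by blast
    qed
  next
    case PreTwoSidedM
    show ?thesis unfolding PreTwoSidedM mathieu.simps right_mathieu_def left_mathieu_def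
    proof (intro conjI us allI impI)
      fix a b assume "\<forall>m\<ge>1. a^m \<in> \<Union>C"
      then obtain V where "V \<in> C" "\<forall>m\<ge>1. a^m \<in> V" using key by blast
      moreover then have "right_mathieu scale V" using Cm PreTwoSidedM by auto
      ultimately show "\<exists>N. \<forall>m\<ge>N. a ^ m * b \<in> \<Union> C" unfolding right_mathieu_def by blast
    next
      fix a b assume "\<forall>m\<ge>1. a^m \<in> \<Union>C"
      then obtain V where "V \<in> C" "\<forall>m\<ge>1. a^m \<in> V" using key by blast
      moreover then have "left_mathieu scale V" using Cm PreTwoSidedM by auto
      ultimately show "\<exists>N. \<forall>m\<ge>N. b * a ^ m \<in> \<Union> C" unfolding left_mathieu_def by blast
    qed
  next
    case TwoSidedM
    show ?thesis unfolding TwoSidedM mathieu.simps two_sided_mathieu_def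
    proof (intro conjI us allI impI)
      fix a b c assume "\<forall>m\<ge>1. a^m \<in> \<Union>C"
      then obtain V where "V \<in> C" "\<forall>m\<ge>1. a^m \<in> V" using key by blast
      moreover then have "two_sided_mathieu scale V" using Cm TwoSidedM by auto
      ultimately show "\<exists>N. \<forall>m\<ge>N. b * a ^ m * c \<in> \<Union> C" unfolding two_sided_mathieu_def by blast
    qed
  qed
qed

lemma strong_mathieu:
  assumes "subspace W" "\<forall>a. (\<forall>m\<ge>1. a^m \<in> W) \<longrightarrow> (\<forall>b c. \<exists>N. \<forall>m\<ge>N. b * a^m * c \<in> W)"
  shows "mathieu t scale W"
proof -
  have l: "left_mathieu scale W" unfolding left_mathieu_def
  proof (intro conjI allI impI assms(1))
    fix a b assume "\<forall>m\<ge>1. a^m \<in> W"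
    then obtain N where "\<forall>m\<ge>N. b*a^m*1 \<in> W" using assms(2) by blast
    then show "\<exists>N. \<forall>m\<ge>N. b*a^m \<in> W" by auto
  qed
  have r: "right_mathieu scale W" unfolding right_mathieu_def
  proof (intro conjI allI impI assms(1))
    fix a b assume "\<forall>m\<ge>1. a^m \<in> W"
    then obtain N where "\<forall>m\<ge>N. 1*a^m*b \<in> W" using assms(2) by blast
    then show "\<exists>N. \<forall>m\<ge>N. a^m*b \<in> W" by auto
  qed
  have tw: "two_sided_mathieu scale W" unfolding two_sided_mathieu_def
    using assms by blast
  show ?thesis by (cases t) (use l r tw in auto)
qed

lemma smul: "scale c x * scale d y = scale (c*d) (x*y)"
  by (simp add: ml[symmetric] mr[symmetric])

lemma sc1_nz: "c \<noteq> 0 \<Longrightarrow> scale c (1::'a) \<noteq> 0" by simp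

lemma indep:
  assumes "x \<notin> range (\<lambda>c. scale c 1)" "scale \<alpha> x = scale \<beta> 1" shows "\<alpha> = 0"
proof (rule ccontr)
  assume "\<alpha> \<noteq> 0"
  then have "x = scale (inverse \<alpha>) (scale \<alpha> x)" by simp
  also have "\<dots> = scale (inverse \<alpha> * \<beta>) 1" using assms(2) by simp
  finally show False using assms(1) by blast
qed

lemma case1:
  assumes xK: "x \<notin> range (\<lambda>c. scale c 1)" and xx: "x*x = 0 \<or> (\<forall>l. x*x \<noteq> scale l x)"
  shows "\<exists>W. subspace W \<and> 1 \<notin> W \<and> W \<noteq> {0} \<and> (\<forall>a. (\<forall>m\<ge>1. a^m \<in> W) \<longrightarrow> (\<forall>b c. \<exists>N. \<forall>m\<ge>N. b*a^m*c \<in> W))"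
proof (intro exI conjI)
  let ?W = "range (\<lambda>c. scale c x)"
  show "subspace ?W"
  proof (rule subspaceI)
    show "0 \<in> ?W" by (rule range_eqI[of _ _ 0]) simp
    show "u + v \<in> ?W" if h: "u \<in> ?W" "v \<in> ?W" for u v
    proof -
      obtain c d where "u = scale c x" "v = scale d x" using h by auto
      then have "u+v = scale (c+d) x" by (simp add: scale_left_distrib)
      then show ?thesis by blast
    qed
    show "scale c u \<in> ?W" if h: "u \<in> ?W" for c u
    proof -
      obtain d where "u = scale d x" using h by auto
      then have "scale c u = scale (c*d) x" by simp
      then show ?thesis by blast
    qed
  qed
  show "1 \<notin> ?W"
  proof
    assume "1 \<in> ?W"
    then obtain c where c: "scale c x = scale 1 1" by auto
    then have "c = 0" using indep[OF xK] by blast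
    then show False using c by simp
  qed
  have x0: "x \<noteq> 0" proof assume "x = 0" then have "x = scale 0 1" by simp then show False using xK by blast qed
  show "?W \<noteq> {0}" proof assume "?W = {0}" moreover have "x \<in> ?W" by (rule range_eqI[of _ _ 1]) simp ultimately show False using x0 by blast qed
  show "\<forall>a. (\<forall>m\<ge>1. a^m \<in> ?W) \<longrightarrow> (\<forall>b c. \<exists>N. \<forall>m\<ge>N. b*a^m*c \<in> ?W)"
  proof (intro allI impI)
    fix a b c assume pw: "\<forall>m\<ge>1. a^m \<in> ?W"
    have z: "0 \<in> ?W" by (rule range_eqI[of _ _ 0]) simp
    obtain d where d: "a = scale d x" using pw[rule_format, of 1] by auto
    obtain e where e: "a*a = scale e x" using pw[rule_format, of 2] by (auto simp: power2_eq_square)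
    have aa: "a*a = scale (d*d) (x*x)" using d smul by simp
    show "\<exists>N. \<forall>m\<ge>N. b*a^m*c \<in> ?W"
    proof (cases "x*x = 0")
      case True
      then have "a*a = 0" using aa by simp
      then have "\<forall>m\<ge>2. a^m = 0"
      proof (intro allI impI)
        fix m :: nat assume "m \<ge> 2"
        then obtain k where "m = k + 2" by (metis le_add_diff_inverse2)
        then show "a^m = 0" using \<open>a*a = 0\<close> by (simp only: power_add power2_eq_square) simp
      qed
      then show ?thesis using z by (intro exI[of _ 2]) auto
    next
      case False
      then have nl: "\<forall>l. x*x \<noteq> scale l x" using xx by blast
      have "d = 0"
      proof (rule ccontr)
        assume "d \<noteq> 0"
        then have "inverse (d*d) * (d*d) = 1" by (intro left_inverse) simp
        then have "x*x = scale (inverse (d*d)) (scale (d*d) (x*x))" by (simp only: scale_scale scale_one)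
        also have de: "scale (d*d) (x*x) = scale e x" using aa e by simp
        also have "scale (inverse (d*d)) (scale e x) = scale (inverse (d*d) * e) x" by (simp only: scale_scale)
        finally show False using nl by blast
      qed
      then have "a = 0" using d by simp
      then show ?thesis using z by (intro exI[of _ 1]) (auto simp: power_0_left)
    qed
  qed
qed


lemma case2:
  assumes x0K: "x0 \<notin> range (\<lambda>c. scale c 1)"
    and all: "\<forall>x. x \<notin> range (\<lambda>c. scale c 1) \<longrightarrow> (\<exists>l. x*x = scale l x)"
  shows "\<exists>W. subspace W \<and> 1 \<notin> W \<and> W \<noteq> {0} \<and> (\<forall>a. (\<forall>m\<ge>1. a^m \<in> W) \<longrightarrow> (\<forall>b c. \<exists>N. \<forall>m\<ge>N. b*a^m*c \<in> W))"
proof -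
  let ?K = "range (\<lambda>c. scale c (1::'a))"
  have negsq: "x*x = -x" if xK: "x \<notin> ?K" for x
  proof -
    obtain l where l: "x*x = scale l x" using all xK by blast
    have yK: "x+1 \<notin> ?K"
    proof
      assume "x+1 \<in> ?K"
      then obtain c where "x+1 = scale c 1" by auto
      then have "x = scale c 1 - scale 1 1" by (simp add: eq_diff_eq)
      then have "x = scale (c-1) 1" by (simp add: scale_left_diff_distrib)
      then show False using xK by blast
    qed
    obtain mu where mu: "(x+1)*(x+1) = scale mu (x+1)" using all yK by blast
    have "(x+1)*(x+1) = x*x + x + x + 1" by (simp add: algebra_simps)
    then have eq: "scale l x + x + x + 1 = scale mu x + scale mu 1" using mu l by (simp add: scale_right_distrib)
    have t2: "scale 2 x = x + x" using scale_left_distrib[of 1 1 x] by simp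
    have "scale (l + 1 + 1 - mu) x = scale (mu - 1) 1"
      using eq by (simp add: algebra_simps t2)
    then have e1: "l + 1 + 1 - mu = 0" by (rule indep[OF xK])
    then have "scale (mu - 1) (1::'a) = 0" using \<open>scale (l + 1 + 1 - mu) x = scale (mu - 1) 1\<close> by simp
    then have "mu = 1" by simp
    then have "l = -1" using e1 by (simp add: algebra_simps eq_neg_iff_add_eq_0)
    then show ?thesis using l by simp
  qed
  have x00: "x0 \<noteq> 0" proof assume "x0 = 0" then have "x0 = scale 0 1" by simp then show False using x0K by blast qed
  have one: "c = 1" if c0: "c \<noteq> 0" for c :: 'k
  proof -
    have cK: "scale c x0 \<notin> ?K"
    proof
      assume "scale c x0 \<in> ?K"
      then obtain d where "scale c x0 = scale d 1" by auto
      then have "x0 = scale (inverse c * d) 1" using c0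
        by (metis left_inverse scale_one scale_scale)
      then show False using x0K by blast
    qed
    have "scale c x0 * scale c x0 = - scale c x0" by (rule negsq[OF cK])
    then have "scale (c*c) (x0*x0) = - scale c x0" by (simp add: smul)
    then have "scale (c*c) x0 = scale c x0" using negsq[OF x0K] by simp
    then have "c*c = c" using x00 by simp
    then show "c = 1" using c0 by (metis mult_cancel_right1 mult.commute)
  qed
  have two: "(1::'k) + 1 = 0"
  proof (rule ccontr)
    assume "(1::'k) + 1 \<noteq> 0"
    then have h: "(1::'k) + 1 = 1" by (rule one)
    show False using h add_cancel_left_right[of "1::'k" 1] by simp
  qed
  have zz: "z + z = 0" for z :: 'a
  proof -
    have "z + z = scale (1+1) z" by (simp only: scale_left_distrib scale_one)
    also have "\<dots> = 0" by (simp only: two scale_zero_left)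
    finally show ?thesis .
  qed
  have negid: "- z = z" for z :: 'a using zz[of z] by (simp add: neg_eq_iff_add_eq_0)
  have idem: "u*u = u" for u :: 'a
  proof (cases "u \<in> ?K")
    case True
    then obtain c where c: "u = scale c 1" by auto
    show ?thesis
    proof (cases "c = 0")
      case True then show ?thesis using c by simp
    next
      case False then show ?thesis using c one[OF False] by simp
    qed
  next
    case False then show ?thesis using negsq negid by simp
  qed
  have comm: "u*v = v*u" for u v :: 'a
  proof -
    have "u*u + u*v + v*u + v*v = u + v" using idem[of "u+v"] by (simp add: algebra_simps)
    then have "u*v + v*u = 0" using idem[of u] idem[of v] by (simp add: algebra_simps)
    then have "u*v = - (v*u)" by (simp add: eq_neg_iff_add_eq_0)
    then show ?thesis using negid by simp
  qed
  have powa: "a^m = a" if "m \<ge> 1" for a :: 'a and m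
    using that
  proof (induction m)
    case 0 then show ?case by simp
  next
    case (Suc m) then show ?case by (cases "m = 0") (auto simp: idem)
  qed
  let ?W = "range (\<lambda>b. b * x0)"
  show ?thesis
  proof (intro exI conjI)
    show "subspace ?W"
    proof (rule subspaceI)
      show "0 \<in> ?W" by (rule range_eqI[of _ _ 0]) simp
      show "u + v \<in> ?W" if h: "u \<in> ?W" "v \<in> ?W" for u v
      proof -
        obtain c d where "u = c * x0" "v = d * x0" using h by auto
        then have "u+v = (c+d) * x0" by (simp add: distrib_right)
        then show ?thesis by blast
      qed
      show "scale c u \<in> ?W" if h: "u \<in> ?W" for c u
      proof -
        obtain d where "u = d * x0" using h by auto
        then have "scale c u = scale c d * x0" by (simp add: ml)
        then show ?thesis by blast
      qed
    qed
    show "1 \<notin> ?W"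
    proof
      assume "1 \<in> ?W"
      then obtain b where b: "1 = b * x0" by auto
      then have "x0 = b * x0 * x0" by simp
      also have "\<dots> = b * (x0 * x0)" by (simp only: mult.assoc)
      also have "\<dots> = b * x0" by (simp only: idem)
      also have "\<dots> = 1" using b by simp
      finally have "x0 = scale 1 1" by simp
      then show False using x0K by blast
    qed
    show "?W \<noteq> {0}"
    proof
      assume "?W = {0}"
      moreover have "x0 \<in> ?W" by (rule range_eqI[of _ _ 1]) simp
      ultimately show False using x00 by blast
    qed
    show "\<forall>a. (\<forall>m\<ge>1. a^m \<in> ?W) \<longrightarrow> (\<forall>b c. \<exists>N. \<forall>m\<ge>N. b*a^m*c \<in> ?W)"
    proof (intro allI impI)
      fix a b c assume pw: "\<forall>m\<ge>1. a^m \<in> ?W"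
      obtain d where d: "a = d * x0" using pw[rule_format, of 1] by auto
      have "\<forall>m\<ge>1. b*a^m*c \<in> ?W"
      proof (intro allI impI)
        fix m :: nat assume "m \<ge> 1"
        then have "b*a^m*c = b*a*c" using powa by simp
        also have "\<dots> = b*(c*a)" using comm[of a c] by (simp add: mult.assoc)
        also have "\<dots> = (b*c*d)*x0" using d by (simp add: mult.assoc)
        finally show "b*a^m*c \<in> ?W" by blast
      qed
      then show "\<exists>N. \<forall>m\<ge>N. b*a^m*c \<in> ?W" by blast
    qed
  qed
qed

end

theorem theorem4p21:
  fixes scale :: "'k::field \<Rightarrow> 'a::ring_1 \<Rightarrow> 'a"
    and t :: mathieu_type
  assumes "is_K_algebra scale"
    and "algebraic_over scale"
    and "range (\<lambda>c. scale c 1) \<noteq> UNIV"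
  shows "(\<forall>M. mathieu t scale M \<and> M \<noteq> UNIV \<longrightarrow>
            (\<exists>N. maximal_nontrivial_mathieu t scale N \<and> M \<subseteq> N))
       \<and> (\<exists>N. maximal_nontrivial_mathieu t scale N)"
proof -
  interpret kalg scale
    using assms(1) unfolding is_K_algebra_def kalg_def kalg_axioms_def by blast
  let ?K = "range (\<lambda>c. scale c (1::'a))"
  have exW: "\<exists>W. subspace W \<and> 1 \<notin> W \<and> W \<noteq> {0} \<and> (\<forall>a. (\<forall>m\<ge>1. a^m \<in> W) \<longrightarrow> (\<forall>b c. \<exists>N. \<forall>m\<ge>N. b*a^m*c \<in> W))"
  proof (cases "\<exists>x. x \<notin> ?K \<and> (x*x = 0 \<or> (\<forall>l. x*x \<noteq> scale l x))")
    case True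
    then obtain x where "x \<notin> ?K" "x*x = 0 \<or> (\<forall>l. x*x \<noteq> scale l x)" by blast
    then show ?thesis by (rule case1)
  next
    case False
    then have all: "\<forall>x. x \<notin> ?K \<longrightarrow> (\<exists>l. x*x = scale l x)" by blast
    obtain x0 where "x0 \<notin> ?K" using assms(3) by blast
    then show ?thesis using all by (rule case2)
  qed
  have main: "\<forall>M. mathieu t scale M \<and> M \<noteq> UNIV \<longrightarrow>
            (\<exists>N. maximal_nontrivial_mathieu t scale N \<and> M \<subseteq> N)"
  proof (intro allI impI)
    fix M assume M: "mathieu t scale M \<and> M \<noteq> UNIV"
    have M1: "1 \<notin> M" using M mathieu_one by blast
    define A where "A = {V. mathieu t scale V \<and> 1 \<notin> V \<and> M \<subseteq> V}"
    have MA: "M \<in> A" using M M1 unfolding A_def by blast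
    have "\<forall>C\<in>chains A. \<exists>U\<in>A. \<forall>X\<in>C. X \<subseteq> U"
    proof
      fix C assume C: "C \<in> chains A"
      show "\<exists>U\<in>A. \<forall>X\<in>C. X \<subseteq> U"
      proof (cases "C = {}")
        case True then show ?thesis using MA by blast
      next
        case False
        have CA: "C \<subseteq> A" using chainsD2[OF C] .
        have ch: "\<forall>X\<in>C. \<forall>Y\<in>C. X \<subseteq> Y \<or> Y \<subseteq> X" using chainsD[OF C] by blast
        have "mathieu t scale (\<Union>C)"
          by (rule chain_mathieu[OF assms(2) False _ ch]) (use CA A_def in auto)
        moreover have "1 \<notin> \<Union>C" using CA A_def by auto
        moreover have "M \<subseteq> \<Union>C" using CA A_def False by auto
        ultimately have "\<Union>C \<in> A" unfolding A_def by blast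
        then show ?thesis by blast
      qed
    qed
    then obtain N0 where N0: "N0 \<in> A" "\<forall>X\<in>A. N0 \<subseteq> X \<longrightarrow> X = N0"
      using Zorn_Lemma2 by blast
    have N0m: "mathieu t scale N0" "1 \<notin> N0" "M \<subseteq> N0" using N0(1) A_def by auto
    show "\<exists>N. maximal_nontrivial_mathieu t scale N \<and> M \<subseteq> N"
    proof (cases "N0 = {0}")
      case True
      obtain W where W: "subspace W" "1 \<notin> W" "W \<noteq> {0}"
        "\<forall>a. (\<forall>m\<ge>1. a^m \<in> W) \<longrightarrow> (\<forall>b c. \<exists>N. \<forall>m\<ge>N. b*a^m*c \<in> W)" using exW by blast
      have "mathieu t scale W" using strong_mathieu[OF W(1) W(4)] .
      moreover have "N0 \<subseteq> W" using True subspace_0[OF W(1)] by auto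
      ultimately have "W \<in> A" using W(2) N0m(3) unfolding A_def by auto
      then have "W = N0" using N0(2) \<open>N0 \<subseteq> W\<close> by blast
      then show ?thesis using True W(3) by blast
    next
      case False
      have "maximal_nontrivial_mathieu t scale N0"
        unfolding maximal_nontrivial_mathieu_def nontrivial_mathieu_def
      proof (intro conjI allI impI)
        show "mathieu t scale N0" "N0 \<noteq> {0}" using N0m(1) False by auto
        show "N0 \<noteq> UNIV" using N0m(2) by auto
        fix W assume W: "(mathieu t scale W \<and> W \<noteq> {0} \<and> W \<noteq> UNIV) \<and> N0 \<subseteq> W"
        then have "1 \<notin> W" using mathieu_one by blast
        then have "W \<in> A" using W N0m(3) unfolding A_def by auto
        then show "W = N0" using N0(2) W by blast
      qed
      then show ?thesis using N0m(3) by blast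
    qed
  qed
  have z: "mathieu t scale {0}"
  proof (rule strong_mathieu)
    show "subspace {0}" by simp
    show "\<forall>a::'a. (\<forall>m\<ge>1. a^m \<in> {0}) \<longrightarrow> (\<forall>b c. \<exists>N. \<forall>m\<ge>N. b*a^m*c \<in> {0})"
    proof (intro allI impI)
      fix a b c assume "\<forall>m\<ge>1. a^m \<in> ({0}::'a set)"
      then have "a = 0" by (metis power_one_right singletonD order_refl)
      then show "\<exists>N. \<forall>m\<ge>N. b*a^m*c \<in> {0}" by (intro exI[of _ 1]) (auto simp: power_0_left)
    qed
  qed
  have "({0}::'a set) \<noteq> UNIV" by (metis UNIV_I singletonD zero_neq_one)
  then show ?thesis using main z by blast
qed

end
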